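(* Let $A\in\mathbb{R}^{n\times d}_{\geq 0}$ and $b\in\mathbb{R}^n_{\geq 0}$ such that no column of $A$ is the $0$ vector and no entry of $b$ is equal to $0$. Assume that the (classical) system $Ax=b$, $x\in\mathbb{R}^d_{\geq 0}$ satisfies the dominance condition. Let $\tilde A\in\mathbb{T}^{n\times d}$ and $\tilde b\in\mathbb{T}^n$ be such that no column of $\tilde A$ is the $-\infty$ vector and no entry of $\tilde b$ is equal to $-\infty$. If, for each $j$, the minima $\min_i (b_i/A_{ij})$ and $\min_i(\tilde b_i-\tilde A_{ij})$ are reached by the same indices (with the convention $\lambda/0=+\infty$ for $\lambda>0$), then the feasible bases of the classical system are the same as the tropical bases of the tropical system $\tilde A\odot x=\tilde b$, $x\in\mathbb{T}^d$, and both systems are nondegenerate.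
   Context: $\mathbb{T}=\mathbb{R}\cup\{-\infty\}$ is the max-plus semifield ($\oplus=\max$, $\odot=+$). Classical: a basis of $Ax=b$, $x\geq 0$ is $B\subset[d]$ with $A_B$ (columns in $B$) square nonsingular; its basic solution is the unique solution with support in $B$; $B$ is feasible if this solution is nonnegative and nondegenerate if its support equals $B$. Tropical: a tropical (feasible) basis of $\tilde A\odot x=\tilde b$ is $B\subset[d]$, $|B|=n$, with a bijection $\phi:[n]\to B$ such that for each $i$, $\tilde b_i-\tilde A_{i\phi(i)}\in\mathbb{T}$ is minimal among $\tilde b_k-\tilde A_{k\phi(i)}$, $k\in[n]$ (with $-\infty-(-\infty)=+\infty$); it is nondegenerate if each such minimum is real and uniquely attained, and the system is nondegenerate if all its bases are (classically: all feasible bases nondegenerate). Dominance condition: the normalized matrix $(\operatorname{diag} b)^{-1}A(\operatorname{diag} u)^{-1}$, with $u_j$ the largest entry of column $j$ of $(\operatorname{diag} b)^{-1}A$, which has entries in $[0,1]$ and a $1$ in each column, satisfies (a) some $n\times n$ submatrix covers (entrywise dominates) a permutation matrix, and (b) every $n\times n$ submatrix covering a permutation matrix has all row sums less than $2$. *)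

theory Defs
  imports "Jordan_Normal_Form.Determinant" "HOL-Library.Extended_Real"
begin

text \<open>Conventions: an n x d matrix is a function nat => nat => _ used on rows {..<n}
  and columns {..<d} (0-based); vectors are nat => _ used on {..<n} resp. {..<d}.
  Tropical numbers (max-plus semifield R \<union> {-\<infinity>}) are represented as extended reals
  different from +\<infinity>.\<close>

definition submat_cols :: "nat \<Rightarrow> (nat \<Rightarrow> nat \<Rightarrow> real) \<Rightarrow> nat set \<Rightarrow> real mat" where
  "submat_cols n A B = mat n n (\<lambda>(i,k). A i (sorted_list_of_set B ! k))"

definition classical_basis :: "nat \<Rightarrow> nat \<Rightarrow> (nat \<Rightarrow> nat \<Rightarrow> real) \<Rightarrow> nat set \<Rightarrow> bool" where
  "classical_basis n d A B \<longleftrightarrow> B \<subseteq> {..<d} \<and> card B = n \<and> det (submat_cols n A B) \<noteq> 0"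

definition basic_solution ::
  "nat \<Rightarrow> nat \<Rightarrow> (nat \<Rightarrow> nat \<Rightarrow> real) \<Rightarrow> (nat \<Rightarrow> real) \<Rightarrow> nat set \<Rightarrow> nat \<Rightarrow> real" where
  "basic_solution n d A b B = (THE x. (\<forall>j. j \<notin> B \<longrightarrow> x j = 0) \<and>
                                    (\<forall>i<n. (\<Sum>j<d. A i j * x j) = b i))"

definition feasible_basis ::
  "nat \<Rightarrow> nat \<Rightarrow> (nat \<Rightarrow> nat \<Rightarrow> real) \<Rightarrow> (nat \<Rightarrow> real) \<Rightarrow> nat set \<Rightarrow> bool" where
  "feasible_basis n d A b B \<longleftrightarrow> classical_basis n d A B \<and>
     (\<forall>j<d. basic_solution n d A b B j \<ge> 0)"

definition nondegenerate_feasible_basis ::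
  "nat \<Rightarrow> nat \<Rightarrow> (nat \<Rightarrow> nat \<Rightarrow> real) \<Rightarrow> (nat \<Rightarrow> real) \<Rightarrow> nat set \<Rightarrow> bool" where
  "nondegenerate_feasible_basis n d A b B \<longleftrightarrow> feasible_basis n d A b B \<and>
     {j. basic_solution n d A b B j \<noteq> 0} = B"

definition classical_nondegenerate ::
  "nat \<Rightarrow> nat \<Rightarrow> (nat \<Rightarrow> nat \<Rightarrow> real) \<Rightarrow> (nat \<Rightarrow> real) \<Rightarrow> bool" where
  "classical_nondegenerate n d A b \<longleftrightarrow>
     (\<forall>B. feasible_basis n d A b B \<longrightarrow> nondegenerate_feasible_basis n d A b B)"

definition col_scale :: "nat \<Rightarrow> (nat \<Rightarrow> nat \<Rightarrow> real) \<Rightarrow> (nat \<Rightarrow> real) \<Rightarrow> nat \<Rightarrow> real" where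
  "col_scale n A b j = Max {A i j / b i | i. i < n}"

definition normalized_matrix :: "nat \<Rightarrow> (nat \<Rightarrow> nat \<Rightarrow> real) \<Rightarrow> (nat \<Rightarrow> real) \<Rightarrow> nat \<Rightarrow> nat \<Rightarrow> real" where
  "normalized_matrix n A b i j = (A i j / b i) / col_scale n A b j"

definition covers_perm :: "nat \<Rightarrow> (nat \<Rightarrow> nat \<Rightarrow> real) \<Rightarrow> nat set \<Rightarrow> bool" where
  "covers_perm n M S \<longleftrightarrow> (\<exists>\<sigma>. bij_betw \<sigma> {..<n} S \<and> (\<forall>i<n. M i (\<sigma> i) \<ge> 1))"

definition dominance_condition ::
  "nat \<Rightarrow> nat \<Rightarrow> (nat \<Rightarrow> nat \<Rightarrow> real) \<Rightarrow> (nat \<Rightarrow> real) \<Rightarrow> bool" where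
  "dominance_condition n d A b \<longleftrightarrow>
     (let M = normalized_matrix n A b in
       (\<exists>S. S \<subseteq> {..<d} \<and> card S = n \<and> covers_perm n M S) \<and>
       (\<forall>S. S \<subseteq> {..<d} \<and> card S = n \<and> covers_perm n M S \<longrightarrow>
            (\<forall>i<n. (\<Sum>j\<in>S. M i j) < 2)))"

definition classical_ratio :: "(nat \<Rightarrow> nat \<Rightarrow> real) \<Rightarrow> (nat \<Rightarrow> real) \<Rightarrow> nat \<Rightarrow> nat \<Rightarrow> ereal" where
  "classical_ratio A b i j = (if A i j = 0 then \<infinity> else ereal (b i / A i j))"

definition tdiff :: "ereal \<Rightarrow> ereal \<Rightarrow> ereal" where
  "tdiff x y = (if y = -\<infinity> then \<infinity> else x - y)"

definition tropical_basis ::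
  "nat \<Rightarrow> nat \<Rightarrow> (nat \<Rightarrow> nat \<Rightarrow> ereal) \<Rightarrow> (nat \<Rightarrow> ereal) \<Rightarrow> nat set \<Rightarrow> bool" where
  "tropical_basis n d At bt B \<longleftrightarrow> B \<subseteq> {..<d} \<and> card B = n \<and>
     (\<exists>\<phi>. bij_betw \<phi> {..<n} B \<and>
        (\<forall>i<n. \<forall>k<n. tdiff (bt i) (At i (\<phi> i)) \<le> tdiff (bt k) (At k (\<phi> i))))"

definition nondegenerate_tropical_basis ::
  "nat \<Rightarrow> nat \<Rightarrow> (nat \<Rightarrow> nat \<Rightarrow> ereal) \<Rightarrow> (nat \<Rightarrow> ereal) \<Rightarrow> nat set \<Rightarrow> bool" where
  "nondegenerate_tropical_basis n d At bt B \<longleftrightarrow> tropical_basis n d At bt B \<and>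
     (\<forall>j\<in>B. \<exists>i<n. tdiff (bt i) (At i j) \<noteq> \<infinity> \<and> tdiff (bt i) (At i j) \<noteq> -\<infinity> \<and>
        (\<forall>k<n. k \<noteq> i \<longrightarrow> tdiff (bt i) (At i j) < tdiff (bt k) (At k j)))"

definition tropical_nondegenerate ::
  "nat \<Rightarrow> nat \<Rightarrow> (nat \<Rightarrow> nat \<Rightarrow> ereal) \<Rightarrow> (nat \<Rightarrow> ereal) \<Rightarrow> bool" where
  "tropical_nondegenerate n d At bt \<longleftrightarrow>
     (\<forall>B. tropical_basis n d At bt B \<longrightarrow> nondegenerate_tropical_basis n d At bt B)"

definition argmin_rows :: "nat \<Rightarrow> (nat \<Rightarrow> ereal) \<Rightarrow> nat set" where
  "argmin_rows n f = {i. i < n \<and> (\<forall>k<n. f i \<le> f k)}"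

end

theory Submission
  imports Defs
begin



lemma sum_supp:
  fixes x :: "nat \<Rightarrow> real"
  assumes "B \<subseteq> {..<d}" "\<forall>j. j \<notin> B \<longrightarrow> x j = 0"
  shows "(\<Sum>j<d. A i j * x j) = (\<Sum>j\<in>B. A i j * x j)"
  using assms by (intro sum.mono_neutral_left[symmetric]) (auto intro: finite_subset)

lemma submat_sum:
  fixes x :: "nat \<Rightarrow> real"
  assumes fin: "finite B" and cB: "card B = n" and i: "i < n"
  shows "(submat_cols n A B *\<^sub>v vec n (\<lambda>k. x (sorted_list_of_set B ! k))) $ i
       = (\<Sum>j\<in>B. A i j * x j)"
proof -
  let ?e = "\<lambda>k. sorted_list_of_set B ! k"
  have bij: "bij_betw ?e {..<n} B"
    by (rule bij_betw_nth) (use fin cB in auto)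
  have "(submat_cols n A B *\<^sub>v vec n (\<lambda>k. x (?e k))) $ i = (\<Sum>k<n. A i (?e k) * x (?e k))"
    using i by (simp add: submat_cols_def mult_mat_vec_def scalar_prod_def lessThan_atLeast0)
  also have "\<dots> = (\<Sum>j\<in>B. A i j * x j)"
    using sum.reindex_bij_betw[OF bij, of "\<lambda>j. A i j * x j"] by simp
  finally show ?thesis .
qed

lemma det_kernel:
  fixes A :: "nat \<Rightarrow> nat \<Rightarrow> real"
  assumes fin: "finite B" and cB: "card B = n"
    and ker: "\<And>z. (\<forall>j. j \<notin> B \<longrightarrow> z j = 0) \<Longrightarrow> (\<forall>i<n. (\<Sum>j\<in>B. A i j * z j) = 0) \<Longrightarrow> \<forall>j\<in>B. z j = 0"
  shows "det (submat_cols n A B) \<noteq> 0"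
proof
  let ?e = "\<lambda>k. sorted_list_of_set B ! k"
  have bij: "bij_betw ?e {..<n} B"
    by (rule bij_betw_nth) (use fin cB in auto)
  have Q: "submat_cols n A B \<in> carrier_mat n n" by (simp add: submat_cols_def)
  assume "det (submat_cols n A B) = 0"
  then obtain v where v: "v \<in> carrier_vec n" "v \<noteq> 0\<^sub>v n" "submat_cols n A B *\<^sub>v v = 0\<^sub>v n"
    using det_0_iff_vec_prod_zero_field[OF Q] by blast
  define z where "z = (\<lambda>j. if j \<in> B then v $ (the_inv_into {..<n} ?e j) else 0)"
  have zsupp: "\<forall>j. j \<notin> B \<longrightarrow> z j = 0" by (simp add: z_def)
  have vz: "v = vec n (\<lambda>k. z (?e k))"
  proof
    show "dim_vec v = dim_vec (vec n (\<lambda>k. z (?e k)))" using v by simp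
    fix k assume "k < dim_vec (vec n (\<lambda>k. z (?e k)))"
    then have k: "k < n" by simp
    have "?e k \<in> B" using bij k by (auto simp: bij_betw_def)
    moreover have "the_inv_into {..<n} ?e (?e k) = k"
      using bij k by (intro the_inv_into_f_f) (auto simp: bij_betw_def)
    ultimately show "v $ k = vec n (\<lambda>k. z (?e k)) $ k" using k by (simp add: z_def)
  qed
  have "\<forall>i<n. (\<Sum>j\<in>B. A i j * z j) = 0"
  proof (intro allI impI)
    fix i assume i: "i < n"
    have "(\<Sum>j\<in>B. A i j * z j) = (submat_cols n A B *\<^sub>v v) $ i"
      using submat_sum[OF fin cB i, of A z] vz by simp
    also have "\<dots> = 0" using v(3) i by simp
    finally show "(\<Sum>j\<in>B. A i j * z j) = 0" .
  qed
  from ker[OF zsupp this] have "\<forall>j\<in>B. z j = 0" .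
  then have "v = 0\<^sub>v n"
    using vz bij by (force simp: bij_betw_def intro!: eq_vecI)
  with v(2) show False by simp
qed

lemma det_solve:
  fixes A :: "nat \<Rightarrow> nat \<Rightarrow> real"
  assumes fin: "finite B" and cB: "card B = n"
    and dt: "det (submat_cols n A B) \<noteq> 0"
  shows "\<exists>x. (\<forall>j. j \<notin> B \<longrightarrow> x j = 0) \<and> (\<forall>i<n. (\<Sum>j\<in>B. A i j * x j) = c i)"
proof -
  let ?e = "\<lambda>k. sorted_list_of_set B ! k"
  let ?Q = "submat_cols n A B"
  have bij: "bij_betw ?e {..<n} B"
    by (rule bij_betw_nth) (use fin cB in auto)
  have Q: "?Q \<in> carrier_mat n n" by (simp add: submat_cols_def)
  from det_non_zero_imp_unit[OF Q dt, of "()"]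
  obtain R where R: "R \<in> carrier_mat n n" "?Q * R = 1\<^sub>m n"
    unfolding Units_def ring_mat_def by auto
  define v where "v = R *\<^sub>v vec n c"
  have v: "v \<in> carrier_vec n" using R by (simp add: v_def)
  have Qv: "?Q *\<^sub>v v = vec n c"
    unfolding v_def using R Q
    by (simp add: assoc_mult_mat_vec[symmetric, of _ n n _ n])
  define x where "x = (\<lambda>j. if j \<in> B then v $ (the_inv_into {..<n} ?e j) else 0)"
  have vx: "v = vec n (\<lambda>k. x (?e k))"
  proof
    show "dim_vec v = dim_vec (vec n (\<lambda>k. x (?e k)))" using v by simp
    fix k assume "k < dim_vec (vec n (\<lambda>k. x (?e k)))"
    then have k: "k < n" by simp
    have "?e k \<in> B" using bij k by (auto simp: bij_betw_def)
    moreover have "the_inv_into {..<n} ?e (?e k) = k"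
      using bij k by (intro the_inv_into_f_f) (auto simp: bij_betw_def)
    ultimately show "v $ k = vec n (\<lambda>k. x (?e k)) $ k" using k by (simp add: x_def)
  qed
  show ?thesis
  proof (intro exI conjI allI impI)
    fix j assume "j \<notin> B" then show "x j = 0" by (simp add: x_def)
  next
    fix i assume i: "i < n"
    have "(\<Sum>j\<in>B. A i j * x j) = (?Q *\<^sub>v v) $ i"
      using submat_sum[OF fin cB i, of A x] vx by simp
    also have "\<dots> = c i" using Qv i by simp
    finally show "(\<Sum>j\<in>B. A i j * x j) = c i" .
  qed
qed



lemma fin_argmax:
  fixes f :: "'a \<Rightarrow> real"
  assumes "finite S" "S \<noteq> {}"
  obtains x where "x \<in> S" "\<And>y. y \<in> S \<Longrightarrow> f y \<le> f x"
proof -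
  have "Max (f ` S) \<in> f ` S" using assms by simp
  then obtain x where x: "x \<in> S" "f x = Max (f ` S)" by (metis imageE)
  have "\<And>y. y \<in> S \<Longrightarrow> f y \<le> f x" using x assms by simp
  with x that show ?thesis by blast
qed

lemma fin_argmin:
  fixes f :: "'a \<Rightarrow> real"
  assumes "finite S" "S \<noteq> {}"
  obtains x where "x \<in> S" "\<And>y. y \<in> S \<Longrightarrow> f x \<le> f y"
proof -
  have "Min (f ` S) \<in> f ` S" using assms by simp
  then obtain x where x: "x \<in> S" "f x = Min (f ` S)" by (metis imageE)
  have "\<And>y. y \<in> S \<Longrightarrow> f x \<le> f y" using x assms by simp
  with x that show ?thesis by blast
qed

locale domsetup =
  fixes n d :: nat and M :: "nat \<Rightarrow> nat \<Rightarrow> real" and r :: "nat \<Rightarrow> nat"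
  assumes npos: "0 < n"
    and M_nonneg: "\<And>i j. i < n \<Longrightarrow> j < d \<Longrightarrow> 0 \<le> M i j"
    and M_le1: "\<And>i j. i < n \<Longrightarrow> j < d \<Longrightarrow> M i j \<le> 1"
    and r_lt: "\<And>j. j < d \<Longrightarrow> r j < n"
    and M_one_iff: "\<And>i j. i < n \<Longrightarrow> j < d \<Longrightarrow> 1 \<le> M i j \<longleftrightarrow> i = r j"
    and rowsum: "\<And>S i. S \<subseteq> {..<d} \<Longrightarrow> bij_betw r S {..<n} \<Longrightarrow> i < n \<Longrightarrow> (\<Sum>j\<in>S. M i j) < 2"
    and ex_col: "\<And>k. k < n \<Longrightarrow> \<exists>c<d. r c = k"
begin

lemma M_r: "j < d \<Longrightarrow> M (r j) j = 1"
  using M_one_iff[of "r j" j] M_le1[of "r j" j] r_lt[of j] by auto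

lemma rho:
  assumes S: "S \<subseteq> {..<d}" "bij_betw r S {..<n}" and j: "j \<in> S"
  shows "(\<Sum>l\<in>S-{j}. M (r j) l) < 1" "0 \<le> (\<Sum>l\<in>S-{j}. M (r j) l)"
proof -
  have fin: "finite S" using S(1) finite_subset by blast
  have jd: "j < d" using S j by auto
  have "(\<Sum>l\<in>S. M (r j) l) = M (r j) j + (\<Sum>l\<in>S-{j}. M (r j) l)"
    using fin j by (simp add: sum.remove)
  moreover have "(\<Sum>l\<in>S. M (r j) l) < 2" using rowsum[OF S r_lt[OF jd]] .
  ultimately show "(\<Sum>l\<in>S-{j}. M (r j) l) < 1" using M_r[OF jd] by simp
  show "0 \<le> (\<Sum>l\<in>S-{j}. M (r j) l)"
    using S jd by (intro sum_nonneg M_nonneg) (auto intro: r_lt)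
qed

lemma good_ne: assumes "bij_betw r S {..<n}" shows "S \<noteq> {}"
  using assms npos by (auto simp: bij_betw_def)

lemma kernel:
  assumes S: "S \<subseteq> {..<d}" "bij_betw r S {..<n}"
    and z: "\<forall>i<n. (\<Sum>j\<in>S. M i j * z j) = 0"
  shows "\<forall>j\<in>S. z j = 0"
proof -
  have fin: "finite S" using S(1) finite_subset by blast
  obtain jm where jm: "jm \<in> S" "\<And>l. l \<in> S \<Longrightarrow> \<bar>z l\<bar> \<le> \<bar>z jm\<bar>"
    using fin_argmax[OF fin good_ne[OF S(2)], of "\<lambda>l. \<bar>z l\<bar>"] by blast
  have jd: "jm < d" using S jm by auto
  let ?i = "r jm"
  let ?rho = "\<Sum>l\<in>S-{jm}. M ?i l"
  have "0 = (\<Sum>l\<in>S. M ?i l * z l)" using z r_lt[OF jd] by simp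
  also have "\<dots> = z jm + (\<Sum>l\<in>S-{jm}. M ?i l * z l)"
    using fin jm(1) M_r[OF jd] by (simp add: sum.remove)
  finally have eq: "z jm = - (\<Sum>l\<in>S-{jm}. M ?i l * z l)" by simp
  have "\<bar>z jm\<bar> \<le> (\<Sum>l\<in>S-{jm}. \<bar>M ?i l * z l\<bar>)"
    unfolding eq abs_minus_cancel by (rule sum_abs)
  also have "\<dots> \<le> (\<Sum>l\<in>S-{jm}. M ?i l * \<bar>z jm\<bar>)"
  proof (rule sum_mono)
    fix l assume l: "l \<in> S - {jm}"
    have "0 \<le> M ?i l" using l S r_lt[OF jd] by (intro M_nonneg) auto
    then show "\<bar>M ?i l * z l\<bar> \<le> M ?i l * \<bar>z jm\<bar>"
      using jm(2)[of l] l by (simp add: abs_mult mult_left_mono)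
  qed
  also have "\<dots> = ?rho * \<bar>z jm\<bar>" by (simp add: sum_distrib_right)
  finally have X: "\<bar>z jm\<bar> \<le> ?rho * \<bar>z jm\<bar>" .
  have R: "?rho < 1" using rho(1)[OF S jm(1)] .
  have "\<bar>z jm\<bar> \<le> 0"
  proof -
    have "(1 - ?rho) * \<bar>z jm\<bar> \<le> 0" using X by (simp add: algebra_simps)
    moreover have "0 < 1 - ?rho" using R by simp
    ultimately show ?thesis by (simp add: mult_le_0_iff)
  qed
  then show ?thesis using jm(2) by (metis abs_le_zero_iff order_trans)
qed

lemma positive:
  assumes S: "S \<subseteq> {..<d}" "bij_betw r S {..<n}"
    and y: "\<forall>i<n. (\<Sum>j\<in>S. M i j * y j) = 1"
  shows "\<forall>j\<in>S. y j > 0"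
proof (rule ccontr)
  assume "\<not> ?thesis"
  then obtain j0 where j0: "j0 \<in> S" "y j0 \<le> 0" by auto
  have fin: "finite S" using S(1) finite_subset by blast
  obtain jm where jm: "jm \<in> S" "\<And>l. l \<in> S \<Longrightarrow> y jm \<le> y l"
    using fin_argmin[OF fin good_ne[OF S(2)], of y] by blast
  obtain jM where jM: "jM \<in> S" "\<And>l. l \<in> S \<Longrightarrow> y l \<le> y jM"
    using fin_argmax[OF fin good_ne[OF S(2)], of y] by blast
  have m0: "y jm \<le> 0" using jm j0 by force
  have rowj: "\<And>j. j \<in> S \<Longrightarrow> 1 = y j + (\<Sum>l\<in>S-{j}. M (r j) l * y l)"
  proof -
    fix j assume j: "j \<in> S"
    have jd: "j < d" using S j by auto
    have "1 = (\<Sum>l\<in>S. M (r j) l * y l)" using y r_lt[OF jd] by simp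
    also have "\<dots> = y j + (\<Sum>l\<in>S-{j}. M (r j) l * y l)"
      using fin j M_r[OF jd] by (simp add: sum.remove)
    finally show "1 = y j + (\<Sum>l\<in>S-{j}. M (r j) l * y l)" .
  qed
  have jMd: "jM < d" "jm < d" using S jM jm by auto
  let ?rM = "\<Sum>l\<in>S-{jM}. M (r jM) l"
  let ?rm = "\<Sum>l\<in>S-{jm}. M (r jm) l"
  have "(\<Sum>l\<in>S-{jM}. M (r jM) l * y l) \<ge> (\<Sum>l\<in>S-{jM}. M (r jM) l * y jm)"
    using S jm(2) r_lt[OF jMd(1)] by (intro sum_mono mult_left_mono M_nonneg) auto
  also have "(\<Sum>l\<in>S-{jM}. M (r jM) l * y jm) = ?rM * y jm" by (simp add: sum_distrib_right)
  finally have X: "y jM \<le> 1 - ?rM * y jm" using rowj[OF jM(1)] by simp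
  have "?rM * y jm \<ge> y jm"
  proof -
    have "?rM \<le> 1" using rho(1)[OF S jM(1)] by simp
    then have "0 \<le> 1 - ?rM" by simp
    then have "(1 - ?rM) * y jm \<le> 0" using m0 by (rule mult_nonneg_nonpos)
    then show ?thesis by (simp add: algebra_simps)
  qed
  with X have X2: "y jM \<le> 1 - y jm" by simp
  have "(\<Sum>l\<in>S-{jm}. M (r jm) l * y l) \<le> (\<Sum>l\<in>S-{jm}. M (r jm) l * y jM)"
    using S jM(2) r_lt[OF jMd(2)] by (intro sum_mono mult_left_mono M_nonneg) auto
  also have "\<dots> = ?rm * y jM" by (simp add: sum_distrib_right)
  finally have "1 \<le> y jm + ?rm * y jM" using rowj[OF jm(1)] by simp
  moreover have "?rm * y jM \<le> ?rm * (1 - y jm)"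
    using rho(2)[OF S jm(1)] X2 by (intro mult_left_mono) auto
  ultimately have "1 - ?rm \<le> y jm * (1 - ?rm)" by (simp add: algebra_simps)
  moreover have "?rm < 1" using rho(1)[OF S jm(1)] .
  ultimately have "1 \<le> y jm" by simp
  with m0 show False by simp
qed

lemma feasible_good:
  assumes B: "B \<subseteq> {..<d}" "card B = n"
    and ynn: "\<forall>j\<in>B. 0 \<le> y j"
    and y: "\<forall>i<n. (\<Sum>j\<in>B. M i j * y j) = 1"
  shows "bij_betw r B {..<n}"
proof (rule ccontr)
  assume nb: "\<not> bij_betw r B {..<n}"
  have fin: "finite B" using B(1) finite_subset by blast
  have sub: "r ` B \<subseteq> {..<n}" using B(1) r_lt by auto
  have "r ` B \<noteq> {..<n}"
  proof
    assume eq: "r ` B = {..<n}"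
    then have "card (r ` B) = card B" using B(2) by simp
    then have "inj_on r B" using fin by (simp add: inj_on_iff_eq_card)
    with eq nb show False by (simp add: bij_betw_def)
  qed
  with sub obtain i0 where i0: "i0 < n" "i0 \<notin> r ` B" by blast
  have "\<forall>k\<in>{..<n}. \<exists>c. c < d \<and> r c = k \<and> (k \<in> r ` B \<longrightarrow> c \<in> B \<and> (\<forall>j\<in>B. r j = k \<longrightarrow> M i0 j \<le> M i0 c))"
  proof
    fix k assume k: "k \<in> {..<n}"
    show "\<exists>c. c < d \<and> r c = k \<and> (k \<in> r ` B \<longrightarrow> c \<in> B \<and> (\<forall>j\<in>B. r j = k \<longrightarrow> M i0 j \<le> M i0 c))"
    proof (cases "k \<in> r ` B")
      case True
      have "finite {j\<in>B. r j = k}" "{j\<in>B. r j = k} \<noteq> {}" using fin True by auto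
      then obtain c where c: "c \<in> {j\<in>B. r j = k}" "\<And>j. j \<in> {j\<in>B. r j = k} \<Longrightarrow> M i0 j \<le> M i0 c"
        using fin_argmax[of "{j\<in>B. r j = k}" "M i0"] by blast
      then show ?thesis using B(1) by auto
    next
      case False
      then show ?thesis using ex_col k by auto
    qed
  qed
  then obtain g where g: "\<And>k. k < n \<Longrightarrow> g k < d \<and> r (g k) = k \<and> (k \<in> r ` B \<longrightarrow> g k \<in> B \<and> (\<forall>j\<in>B. r j = k \<longrightarrow> M i0 j \<le> M i0 (g k)))"
    by (metis lessThan_iff)
  let ?S = "g ` {..<n}"
  have injg: "inj_on g {..<n}" by (rule inj_onI) (metis g lessThan_iff)
  have Sd: "?S \<subseteq> {..<d}" using g by auto
  have bijS: "bij_betw r ?S {..<n}"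
    unfolding bij_betw_def
  proof
    show "inj_on r ?S" by (rule inj_onI) (metis g imageE lessThan_iff)
    show "r ` ?S = {..<n}"
    proof
      show "r ` ?S \<subseteq> {..<n}" using g by auto
      show "{..<n} \<subseteq> r ` ?S"
      proof
        fix k assume "k \<in> {..<n}"
        then have "k = r (g k)" "g k \<in> ?S" using g by auto
        then show "k \<in> r ` ?S" by blast
      qed
    qed
  qed
  have "(\<Sum>j\<in>?S. M i0 j) < 2" using rowsum[OF Sd bijS i0(1)] .
  also have "(\<Sum>j\<in>?S. M i0 j) = (\<Sum>k<n. M i0 (g k))" using sum.reindex[OF injg] by simp
  also have "\<dots> = M i0 (g i0) + (\<Sum>k\<in>{..<n}-{i0}. M i0 (g k))" using i0 by (simp add: sum.remove)
  finally have s1: "(\<Sum>k\<in>{..<n}-{i0}. M i0 (g k)) < 1"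
    using M_one_iff[of i0 "g i0"] g[OF i0(1)] i0 by simp
  have s2: "(\<Sum>k\<in>r ` B. M i0 (g k)) \<le> (\<Sum>k\<in>{..<n}-{i0}. M i0 (g k))"
    using sub i0 g by (intro sum_mono2) (auto intro!: M_nonneg)
  have fib: "\<And>k. k \<in> r ` B \<Longrightarrow> (\<Sum>j\<in>{j\<in>B. r j = k}. y j) \<le> 1"
  proof -
    fix k assume k: "k \<in> r ` B"
    then have kn: "k < n" using sub by auto
    have "(\<Sum>j\<in>{j\<in>B. r j = k}. y j) \<le> (\<Sum>j\<in>{j\<in>B. r j = k}. M k j * y j)"
    proof (rule sum_mono)
      fix j assume j: "j \<in> {j\<in>B. r j = k}"
      then have "1 \<le> M k j" "0 \<le> y j" using M_one_iff[of k j] kn B(1) ynn by auto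
      then show "y j \<le> M k j * y j" by (simp add: mult_le_cancel_right1)
    qed
    also have "\<dots> \<le> (\<Sum>j\<in>B. M k j * y j)"
      using fin ynn B(1) kn by (intro sum_mono2) (auto intro!: mult_nonneg_nonneg M_nonneg)
    also have "\<dots> = 1" using y kn by simp
    finally show "(\<Sum>j\<in>{j\<in>B. r j = k}. y j) \<le> 1" .
  qed
  have "1 = (\<Sum>j\<in>B. M i0 j * y j)" using y i0 by simp
  also have "\<dots> = (\<Sum>k\<in>r ` B. \<Sum>j\<in>{j\<in>B. r j = k}. M i0 j * y j)"
    using fin by (rule sum.image_gen)
  also have "\<dots> \<le> (\<Sum>k\<in>r ` B. \<Sum>j\<in>{j\<in>B. r j = k}. M i0 (g k) * y j)"
  proof (intro sum_mono)
    fix k j assume k: "k \<in> r ` B" and j: "j \<in> {j\<in>B. r j = k}"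
    then have "M i0 j \<le> M i0 (g k)" using g sub by blast
    then show "M i0 j * y j \<le> M i0 (g k) * y j" using ynn j by (simp add: mult_right_mono)
  qed
  also have "\<dots> = (\<Sum>k\<in>r ` B. M i0 (g k) * (\<Sum>j\<in>{j\<in>B. r j = k}. y j))"
    by (simp add: sum_distrib_left)
  also have "\<dots> \<le> (\<Sum>k\<in>r ` B. M i0 (g k))"
  proof (rule sum_mono)
    fix k assume k: "k \<in> r ` B"
    have "0 \<le> M i0 (g k)" using g k sub i0 by (intro M_nonneg) auto
    then show "M i0 (g k) * (\<Sum>j\<in>{j\<in>B. r j = k}. y j) \<le> M i0 (g k)"
      using fib[OF k] by (simp add: mult_left_le)
  qed
  finally show False using s1 s2 by simp
qed
end


lemma two_le_sum:
  fixes f :: "nat \<Rightarrow> real"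
  assumes "finite S" "\<And>x. x \<in> S \<Longrightarrow> 0 \<le> f x" "a \<in> S" "c \<in> S" "a \<noteq> c" "1 \<le> f a" "1 \<le> f c"
  shows "2 \<le> (\<Sum>x\<in>S. f x)"
proof -
  have "(\<Sum>x\<in>{a,c}. f x) \<le> (\<Sum>x\<in>S. f x)"
    using assms by (intro sum_mono2) auto
  moreover have "(\<Sum>x\<in>{a,c}. f x) = f a + f c" using assms by simp
  ultimately show ?thesis using assms by simp
qed

lemma col_unique:
  fixes M :: "nat \<Rightarrow> nat \<Rightarrow> real"
  assumes Mnn: "\<And>i j. i < n \<Longrightarrow> j < d \<Longrightarrow> 0 \<le> M i j"
    and S0: "S0 \<subseteq> {..<d}" "card S0 = n" "bij_betw \<sigma>0 {..<n} S0" "\<And>i. i < n \<Longrightarrow> 1 \<le> M i (\<sigma>0 i)"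
    and rs: "\<And>S. S \<subseteq> {..<d} \<Longrightarrow> card S = n \<Longrightarrow> covers_perm n M S \<Longrightarrow> \<forall>i<n. (\<Sum>j\<in>S. M i j) < 2"
    and j: "j < d" and ik: "i < n" "k < n" "1 \<le> M i j" "1 \<le> M k j"
  shows "i = k"
proof (rule ccontr)
  assume ne: "i \<noteq> k"
  have finS0: "finite S0" using S0(1) finite_subset by blast
  have cov0: "covers_perm n M S0" unfolding covers_perm_def using S0 by blast
  have inj0: "inj_on \<sigma>0 {..<n}" and im0: "\<sigma>0 ` {..<n} = S0" using S0(3) by (auto simp: bij_betw_def)
  show False
  proof (cases "j \<in> S0")
    case True
    then obtain m where m: "m < n" "j = \<sigma>0 m" using im0 by auto
    obtain l where l: "l < n" "l \<noteq> m" "1 \<le> M l j" using ne ik m by metis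
    have "\<sigma>0 l \<noteq> j" using inj0 l m by (metis inj_on_contraD lessThan_iff)
    moreover have "\<sigma>0 l \<in> S0" using im0 l by auto
    ultimately have "2 \<le> (\<Sum>x\<in>S0. M l x)"
      using two_le_sum[OF finS0, of "M l" "\<sigma>0 l" j] Mnn S0 l True by auto
    then show False using rs[OF S0(1) S0(2) cov0] l by force
  next
    case False
    define S' where "S' = insert j (S0 - {\<sigma>0 k})"
    define \<sigma>' where "\<sigma>' = \<sigma>0(k := j)"
    have S'd: "S' \<subseteq> {..<d}" using S0 j by (auto simp: S'_def)
    have k0: "\<sigma>0 k \<in> S0" using im0 ik by auto
    have cS': "card S' = n" using False finS0 k0 S0(2) ik by (simp add: S'_def card_Diff_singleton)
    have bij': "bij_betw \<sigma>' {..<n} S'"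
      unfolding bij_betw_def
    proof
      show "inj_on \<sigma>' {..<n}"
        using inj0 False im0 by (auto simp: \<sigma>'_def inj_on_def)
      show "\<sigma>' ` {..<n} = S'"
      proof
        show "\<sigma>' ` {..<n} \<subseteq> S'" using inj0 im0 ik by (auto simp: \<sigma>'_def S'_def inj_on_def)
        show "S' \<subseteq> \<sigma>' ` {..<n}"
        proof
          fix x assume x: "x \<in> S'"
          show "x \<in> \<sigma>' ` {..<n}"
          proof (cases "x = j")
            case True then show ?thesis using ik by (auto simp: \<sigma>'_def)
          next
            case False
            then have "x \<in> S0" "x \<noteq> \<sigma>0 k" using x by (auto simp: S'_def)
            then obtain a where "a < n" "x = \<sigma>0 a" "a \<noteq> k" using im0 by auto
            then show ?thesis by (auto simp: \<sigma>'_def)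
          qed
        qed
      qed
    qed
    have cov': "covers_perm n M S'"
      unfolding covers_perm_def using bij' S0(4) ik by (auto simp: \<sigma>'_def)
    have fin': "finite S'" using S'd finite_subset by blast
    have "\<sigma>0 i \<noteq> \<sigma>0 k" using inj0 ne ik by (metis inj_on_contraD lessThan_iff)
    then have iS: "\<sigma>0 i \<in> S'" using im0 ik by (auto simp: S'_def)
    have "\<sigma>0 i \<noteq> j" using False im0 ik by auto
    then have "2 \<le> (\<Sum>x\<in>S'. M i x)"
      using two_le_sum[OF fin', of "M i" "\<sigma>0 i" j] Mnn S'd ik iS S0(4)
      by (auto simp: S'_def)
    then show False using rs[OF S'd cS' cov'] ik by force
  qed
qed



lemma det_kernel_conv:
  fixes A :: "nat \<Rightarrow> nat \<Rightarrow> real"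
  assumes fin: "finite B" and cB: "card B = n" and dt: "det (submat_cols n A B) \<noteq> 0"
    and zs: "\<forall>j. j \<notin> B \<longrightarrow> z j = 0" and z: "\<forall>i<n. (\<Sum>j\<in>B. A i j * z j) = 0"
  shows "\<forall>j. z j = 0"
proof -
  let ?e = "\<lambda>k. sorted_list_of_set B ! k"
  let ?v = "vec n (\<lambda>k. z (?e k))"
  have bij: "bij_betw ?e {..<n} B"
    by (rule bij_betw_nth) (use fin cB in auto)
  have Q: "submat_cols n A B \<in> carrier_mat n n" by (simp add: submat_cols_def)
  have "submat_cols n A B *\<^sub>v ?v = 0\<^sub>v n"
  proof (rule eq_vecI)
    fix i assume "i < dim_vec (0\<^sub>v n :: real vec)"
    then have i: "i < n" by simp
    show "(submat_cols n A B *\<^sub>v ?v) $ i = 0\<^sub>v n $ i"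
      using submat_sum[OF fin cB i, of A z] z i by simp
  qed (simp add: submat_cols_def)
  then have "?v = 0\<^sub>v n"
    using det_0_iff_vec_prod_zero_field[OF Q] dt vec_carrier[of n] by blast
  then have "\<forall>k<n. z (?e k) = 0" by (metis index_vec index_zero_vec(1))
  then have "\<forall>j\<in>B. z j = 0" using bij by (force simp: bij_betw_def)
  with zs show ?thesis by blast
qed

locale ctx =
  fixes n d :: nat
    and A :: "nat \<Rightarrow> nat \<Rightarrow> real" and b :: "nat \<Rightarrow> real"
    and At :: "nat \<Rightarrow> nat \<Rightarrow> ereal" and bt :: "nat \<Rightarrow> ereal"
  assumes npos: "0 < n"
    and A_nonneg: "\<forall>i<n. \<forall>j<d. A i j \<ge> 0"
    and b_nonneg: "\<forall>i<n. b i \<ge> 0"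
    and A_col_nonzero: "\<forall>j<d. \<exists>i<n. A i j \<noteq> 0"
    and b_nonzero: "\<forall>i<n. b i \<noteq> 0"
    and dom: "dominance_condition n d A b"
    and At_trop: "\<forall>i<n. \<forall>j<d. At i j \<noteq> \<infinity>"
    and bt_trop: "\<forall>i<n. bt i \<noteq> \<infinity>"
    and At_col: "\<forall>j<d. \<exists>i<n. At i j \<noteq> -\<infinity>"
    and bt_fin: "\<forall>i<n. bt i \<noteq> -\<infinity>"
    and same_argmin: "\<forall>j<d. argmin_rows n (\<lambda>i. classical_ratio A b i j)
                            = argmin_rows n (\<lambda>i. tdiff (bt i) (At i j))"
begin

abbreviation "u \<equiv> col_scale n A b"
abbreviation "M \<equiv> normalized_matrix n A b"

lemma bpos: "i < n \<Longrightarrow> 0 < b i"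
  using b_nonneg b_nonzero by (simp add: order_less_le)

lemma u_ge: "i < n \<Longrightarrow> A i j / b i \<le> u j"
  unfolding col_scale_def by (rule Max_ge) auto

lemma u_in: "\<exists>i<n. u j = A i j / b i"
proof -
  have "finite {A i j / b i | i. i < n}" "{A i j / b i | i. i < n} \<noteq> {}" using npos by auto
  from Max_in[OF this] show ?thesis unfolding col_scale_def by auto
qed

lemma u_pos: "j < d \<Longrightarrow> 0 < u j"
proof -
  assume j: "j < d"
  then obtain i where i: "i < n" "A i j \<noteq> 0" using A_col_nonzero by auto
  then have "0 < A i j / b i" using A_nonneg j bpos[OF i(1)] by (simp add: order_less_le)
  with u_ge[OF i(1), of j] show ?thesis by linarith
qed

lemma M_def': "M i j = (A i j / b i) / u j"
  by (simp add: normalized_matrix_def)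

lemma M_nonneg: "i < n \<Longrightarrow> j < d \<Longrightarrow> 0 \<le> M i j"
  unfolding M_def' using A_nonneg bpos u_pos by (simp add: order_less_imp_le)

lemma M_le1: "i < n \<Longrightarrow> j < d \<Longrightarrow> M i j \<le> 1"
  unfolding M_def' by (subst divide_le_eq_1_pos[OF u_pos]) (auto intro: u_ge)

lemma M_ge1_iff: "i < n \<Longrightarrow> j < d \<Longrightarrow> 1 \<le> M i j \<longleftrightarrow> A i j / b i = u j"
proof -
  assume i: "i < n" and j: "j < d"
  have "1 \<le> M i j \<longleftrightarrow> u j \<le> A i j / b i"
    unfolding M_def' by (rule le_divide_eq_1_pos[OF u_pos[OF j]])
  then show ?thesis using u_ge[OF i, of j] by linarith
qed

lemma scale: "i < n \<Longrightarrow> j < d \<Longrightarrow> A i j = b i * (M i j * u j)"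
  unfolding M_def' using bpos[of i] u_pos[of j] by simp

lemma argmin_classical:
  assumes i: "i < n" and j: "j < d"
  shows "i \<in> argmin_rows n (\<lambda>i. classical_ratio A b i j) \<longleftrightarrow> 1 \<le> M i j"
proof
  assume am: "i \<in> argmin_rows n (\<lambda>i. classical_ratio A b i j)"
  then have le: "\<And>k. k < n \<Longrightarrow> classical_ratio A b i j \<le> classical_ratio A b k j"
    by (auto simp: argmin_rows_def)
  obtain k0 where k0: "k0 < n" "A k0 j \<noteq> 0" using A_col_nonzero j by auto
  have Ai: "A i j \<noteq> 0"
  proof
    assume "A i j = 0"
    then have "classical_ratio A b i j = \<infinity>" by (simp add: classical_ratio_def)
    with le[OF k0(1)] k0(2) show False by (simp add: classical_ratio_def)
  qed
  have Aipos: "0 < A i j" using Ai A_nonneg i j by (simp add: order_less_le)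
  have "\<forall>k<n. A k j / b k \<le> A i j / b i"
  proof (intro allI impI)
    fix k assume k: "k < n"
    show "A k j / b k \<le> A i j / b i"
    proof (cases "A k j = 0")
      case True then show ?thesis using Aipos bpos[OF i] by simp
    next
      case False
      then have Akpos: "0 < A k j" using A_nonneg k j by (simp add: order_less_le)
      from le[OF k] Ai False have "b i / A i j \<le> b k / A k j" by (simp add: classical_ratio_def)
      then show ?thesis using Akpos Aipos bpos[OF i] bpos[OF k]
        by (simp add: divide_simps mult.commute)
    qed
  qed
  then have "u j \<le> A i j / b i" using u_in[of j] by auto
  with u_ge[OF i, of j] have "A i j / b i = u j" by simp
  then show "1 \<le> M i j" using M_ge1_iff[OF i j] by simp
next
  assume "1 \<le> M i j"
  then have eq: "A i j / b i = u j" using M_ge1_iff[OF i j] by simp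
  then have "0 < A i j / b i" using u_pos[OF j] by simp
  then have Aipos: "0 < A i j" using bpos[OF i] by (simp add: zero_less_divide_iff)
  have "\<forall>k<n. classical_ratio A b i j \<le> classical_ratio A b k j"
  proof (intro allI impI)
    fix k assume k: "k < n"
    show "classical_ratio A b i j \<le> classical_ratio A b k j"
    proof (cases "A k j = 0")
      case True then show ?thesis by (simp add: classical_ratio_def)
    next
      case False
      then have Akpos: "0 < A k j" using A_nonneg k j by (simp add: order_less_le)
      have "A k j / b k \<le> A i j / b i" using u_ge[OF k, of j] eq by simp
      then have "b i / A i j \<le> b k / A k j" using Akpos Aipos bpos[OF i] bpos[OF k]
        by (simp add: divide_simps mult.commute)
      then show ?thesis using Aipos False by (simp add: classical_ratio_def)
    qed
  qed
  then show "i \<in> argmin_rows n (\<lambda>i. classical_ratio A b i j)" using i by (simp add: argmin_rows_def)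
qed

lemma dom_a: "\<exists>S0 \<sigma>0. S0 \<subseteq> {..<d} \<and> card S0 = n \<and> bij_betw \<sigma>0 {..<n} S0 \<and> (\<forall>i<n. 1 \<le> M i (\<sigma>0 i))"
  using dom unfolding dominance_condition_def Let_def covers_perm_def by blast

lemma dom_b: "S \<subseteq> {..<d} \<Longrightarrow> card S = n \<Longrightarrow> covers_perm n M S \<Longrightarrow> \<forall>i<n. (\<Sum>j\<in>S. M i j) < 2"
  using dom unfolding dominance_condition_def Let_def by blast

lemma uniq: "j < d \<Longrightarrow> i < n \<Longrightarrow> k < n \<Longrightarrow> 1 \<le> M i j \<Longrightarrow> 1 \<le> M k j \<Longrightarrow> i = k"
proof -
  assume *: "j < d" "i < n" "k < n" "1 \<le> M i j" "1 \<le> M k j"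
  obtain S0 \<sigma>0 where S0: "S0 \<subseteq> {..<d}" "card S0 = n" "bij_betw \<sigma>0 {..<n} S0" "\<And>i. i < n \<Longrightarrow> 1 \<le> M i (\<sigma>0 i)"
    using dom_a by blast
  show "i = k"
    by (rule col_unique[of n d M, OF M_nonneg S0 dom_b *]) auto
qed

lemma ex_one: "j < d \<Longrightarrow> \<exists>i<n. 1 \<le> M i j"
proof -
  assume j: "j < d"
  obtain i where i: "i < n" "u j = A i j / b i" using u_in[of j] by blast
  then have "1 \<le> M i j" using M_ge1_iff[OF i(1) j] by simp
  with i(1) show ?thesis by blast
qed

definition r where "r j = (THE i. i < n \<and> 1 \<le> M i j)"

lemma r_prop: "j < d \<Longrightarrow> r j < n \<and> 1 \<le> M (r j) j"
proof -
  assume j: "j < d"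
  have "\<exists>!i. i < n \<and> 1 \<le> M i j" using ex_one[OF j] uniq[OF j] by blast
  from theI'[OF this] show ?thesis unfolding r_def .
qed

lemma M_one_iff: "i < n \<Longrightarrow> j < d \<Longrightarrow> 1 \<le> M i j \<longleftrightarrow> i = r j"
proof -
  assume i: "i < n" and j: "j < d"
  have r: "r j < n" "1 \<le> M (r j) j" using r_prop[OF j] by auto
  show ?thesis
  proof
    assume "1 \<le> M i j" then show "i = r j" using uniq[OF j i r(1) _ r(2)] by simp
  next
    assume "i = r j" then show "1 \<le> M i j" using r(2) by simp
  qed
qed

lemma covers_iff:
  assumes S: "S \<subseteq> {..<d}"
  shows "(card S = n \<and> covers_perm n M S) \<longleftrightarrow> bij_betw r S {..<n}"
proof
  assume "card S = n \<and> covers_perm n M S"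
  then obtain \<sigma> where \<sigma>: "bij_betw \<sigma> {..<n} S" "\<And>i. i < n \<Longrightarrow> 1 \<le> M i (\<sigma> i)"
    unfolding covers_perm_def by blast
  have r\<sigma>: "\<And>i. i < n \<Longrightarrow> r (\<sigma> i) = i"
  proof -
    fix i assume i: "i < n"
    have "\<sigma> i \<in> S" using \<sigma>(1) i by (auto simp: bij_betw_def)
    then have "\<sigma> i < d" using S by auto
    then show "r (\<sigma> i) = i" using M_one_iff[OF i] \<sigma>(2)[OF i] by simp
  qed
  have im: "\<sigma> ` {..<n} = S" using \<sigma>(1) by (simp add: bij_betw_def)
  show "bij_betw r S {..<n}"
    unfolding bij_betw_def
  proof
    show "inj_on r S"
    proof (rule inj_onI)
      fix x y assume "x \<in> S" "y \<in> S" "r x = r y"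
      then show "x = y" using im r\<sigma> by auto
    qed
    show "r ` S = {..<n}"
    proof
      show "r ` S \<subseteq> {..<n}" using im r\<sigma> by auto
      show "{..<n} \<subseteq> r ` S"
      proof
        fix i assume "i \<in> {..<n}"
        then have "i = r (\<sigma> i)" "\<sigma> i \<in> S" using r\<sigma> im by auto
        then show "i \<in> r ` S" by blast
      qed
    qed
  qed
next
  assume b: "bij_betw r S {..<n}"
  let ?\<sigma> = "the_inv_into S r"
  have 1: "bij_betw ?\<sigma> {..<n} S" using bij_betw_the_inv_into[OF b] .
  have 2: "\<And>i. i < n \<Longrightarrow> r (?\<sigma> i) = i" using f_the_inv_into_f_bij_betw[OF b] by auto
  have "\<And>i. i < n \<Longrightarrow> 1 \<le> M i (?\<sigma> i)"
  proof -
    fix i assume i: "i < n"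
    have "?\<sigma> i \<in> S" using 1 i by (auto simp: bij_betw_def)
    then have "?\<sigma> i < d" using S by auto
    then show "1 \<le> M i (?\<sigma> i)" using M_one_iff[OF i] 2[OF i] by simp
  qed
  then show "card S = n \<and> covers_perm n M S"
    using 1 bij_betw_same_card[OF b] unfolding covers_perm_def by auto
qed

sublocale ds: domsetup n d M r
proof
  show "0 < n" by (rule npos)
  show "\<And>i j. i < n \<Longrightarrow> j < d \<Longrightarrow> 0 \<le> M i j" by (rule M_nonneg)
  show "\<And>i j. i < n \<Longrightarrow> j < d \<Longrightarrow> M i j \<le> 1" by (rule M_le1)
  show "\<And>j. j < d \<Longrightarrow> r j < n" using r_prop by blast
  show "\<And>i j. i < n \<Longrightarrow> j < d \<Longrightarrow> 1 \<le> M i j \<longleftrightarrow> i = r j" by (rule M_one_iff)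
  show "\<And>S i. S \<subseteq> {..<d} \<Longrightarrow> bij_betw r S {..<n} \<Longrightarrow> i < n \<Longrightarrow> (\<Sum>j\<in>S. M i j) < 2"
    using covers_iff dom_b by blast
  show "\<And>k. k < n \<Longrightarrow> \<exists>c<d. r c = k"
  proof -
    fix k assume k: "k < n"
    obtain S0 \<sigma>0 where S0: "S0 \<subseteq> {..<d}" "card S0 = n" "bij_betw \<sigma>0 {..<n} S0" "\<And>i. i < n \<Longrightarrow> 1 \<le> M i (\<sigma>0 i)"
      using dom_a by blast
    have sk: "\<sigma>0 k < d" using S0(1,3) k by (auto simp: bij_betw_def)
    moreover have "r (\<sigma>0 k) = k" using M_one_iff[OF k sk] S0(4)[OF k] by simp
    ultimately show "\<exists>c<d. r c = k" by blast
  qed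
qed

lemma trop_min_iff:
  assumes i: "i < n" and j: "j < d"
  shows "(\<forall>k<n. tdiff (bt i) (At i j) \<le> tdiff (bt k) (At k j)) \<longleftrightarrow> 1 \<le> M i j"
proof -
  have "(\<forall>k<n. tdiff (bt i) (At i j) \<le> tdiff (bt k) (At k j)) \<longleftrightarrow> i \<in> argmin_rows n (\<lambda>i. tdiff (bt i) (At i j))"
    using i by (simp add: argmin_rows_def)
  also have "\<dots> \<longleftrightarrow> i \<in> argmin_rows n (\<lambda>i. classical_ratio A b i j)" using same_argmin j by simp
  also have "\<dots> \<longleftrightarrow> 1 \<le> M i j" using argmin_classical[OF i j] .
  finally show ?thesis .
qed

lemma trop_iff: "tropical_basis n d At bt B \<longleftrightarrow> B \<subseteq> {..<d} \<and> bij_betw r B {..<n}"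
proof
  assume t: "tropical_basis n d At bt B"
  then obtain \<phi> where \<phi>: "B \<subseteq> {..<d}" "card B = n" "bij_betw \<phi> {..<n} B"
     "\<forall>i<n. \<forall>k<n. tdiff (bt i) (At i (\<phi> i)) \<le> tdiff (bt k) (At k (\<phi> i))"
    unfolding tropical_basis_def by blast
  have "\<forall>i<n. 1 \<le> M i (\<phi> i)"
  proof (intro allI impI)
    fix i assume i: "i < n"
    have "\<phi> i < d" using \<phi>(1,3) i by (auto simp: bij_betw_def)
    then show "1 \<le> M i (\<phi> i)" using trop_min_iff[OF i] \<phi>(4) i by blast
  qed
  then have "covers_perm n M B" using \<phi>(3) unfolding covers_perm_def by blast
  then show "B \<subseteq> {..<d} \<and> bij_betw r B {..<n}" using covers_iff[OF \<phi>(1)] \<phi>(1,2) by blast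
next
  assume g: "B \<subseteq> {..<d} \<and> bij_betw r B {..<n}"
  then have "card B = n" "covers_perm n M B" using covers_iff by blast+
  then obtain \<phi> where \<phi>: "bij_betw \<phi> {..<n} B" "\<And>i. i < n \<Longrightarrow> 1 \<le> M i (\<phi> i)"
    unfolding covers_perm_def by blast
  have "\<forall>i<n. \<forall>k<n. tdiff (bt i) (At i (\<phi> i)) \<le> tdiff (bt k) (At k (\<phi> i))"
  proof (intro allI impI)
    fix i k assume i: "i < n" and k: "k < n"
    have "\<phi> i < d" using g \<phi>(1) i by (auto simp: bij_betw_def)
    then show "tdiff (bt i) (At i (\<phi> i)) \<le> tdiff (bt k) (At k (\<phi> i))"
      using trop_min_iff[OF i] \<phi>(2)[OF i] k by blast
  qed
  then show "tropical_basis n d At bt B" unfolding tropical_basis_def using g \<open>card B = n\<close> \<phi>(1) by blast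
qed

lemma trop_nondeg:
  assumes t: "tropical_basis n d At bt B"
  shows "nondegenerate_tropical_basis n d At bt B"
  unfolding nondegenerate_tropical_basis_def
proof (intro conjI t ballI)
  fix j assume jB: "j \<in> B"
  have j: "j < d" using t jB by (auto simp: tropical_basis_def)
  let ?i = "r j"
  have i: "?i < n" "1 \<le> M ?i j" using r_prop[OF j] by auto
  have mn: "\<forall>k<n. tdiff (bt ?i) (At ?i j) \<le> tdiff (bt k) (At k j)" using trop_min_iff[OF i(1) j] i(2) by blast
  obtain k0 where k0: "k0 < n" "At k0 j \<noteq> -\<infinity>" using At_col j by blast
  have "tdiff (bt k0) (At k0 j) \<noteq> \<infinity>"
    using k0 bt_trop bt_fin At_trop j by (cases "bt k0"; cases "At k0 j"; auto simp: tdiff_def)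
  moreover have "tdiff (bt ?i) (At ?i j) \<le> tdiff (bt k0) (At k0 j)" using mn k0(1) by blast
  ultimately have ninf: "tdiff (bt ?i) (At ?i j) \<noteq> \<infinity>" by auto
  have nminf: "tdiff (bt ?i) (At ?i j) \<noteq> -\<infinity>"
    using i bt_trop bt_fin At_trop j by (cases "bt ?i"; cases "At ?i j"; auto simp: tdiff_def)
  have strict: "\<forall>k<n. k \<noteq> ?i \<longrightarrow> tdiff (bt ?i) (At ?i j) < tdiff (bt k) (At k j)"
  proof (intro allI impI)
    fix k assume k: "k < n" "k \<noteq> ?i"
    show "tdiff (bt ?i) (At ?i j) < tdiff (bt k) (At k j)"
    proof (rule ccontr)
      assume "\<not> ?thesis"
      then have eq: "tdiff (bt k) (At k j) = tdiff (bt ?i) (At ?i j)" using mn k by (simp add: not_less order_antisym)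
      have "\<forall>l<n. tdiff (bt k) (At k j) \<le> tdiff (bt l) (At l j)" using mn eq by simp
      then have "1 \<le> M k j" using trop_min_iff[OF k(1) j] by blast
      then have "k = ?i" using M_one_iff[OF k(1) j] by simp
      with k show False by simp
    qed
  qed
  show "\<exists>i<n. tdiff (bt i) (At i j) \<noteq> \<infinity> \<and> tdiff (bt i) (At i j) \<noteq> -\<infinity> \<and>
        (\<forall>k<n. k \<noteq> i \<longrightarrow> tdiff (bt i) (At i j) < tdiff (bt k) (At k j))"
    using i(1) ninf nminf strict by blast
qed

lemma scale_sum:
  assumes B: "B \<subseteq> {..<d}" and i: "i < n"
  shows "(\<Sum>j\<in>B. A i j * z j) = b i * (\<Sum>j\<in>B. M i j * (u j * z j))"
proof -
  have "(\<Sum>j\<in>B. A i j * z j) = (\<Sum>j\<in>B. b i * (M i j * (u j * z j)))"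
  proof (rule sum.cong)
    fix j assume "j \<in> B" then have "j < d" using B by auto
    then show "A i j * z j = b i * (M i j * (u j * z j))" using scale[OF i] by (simp add: algebra_simps)
  qed simp
  also have "\<dots> = b i * (\<Sum>j\<in>B. M i j * (u j * z j))" by (simp add: sum_distrib_left)
  finally show ?thesis .
qed

lemma sol_iff:
  assumes B: "B \<subseteq> {..<d}" and xs: "\<forall>j. j \<notin> B \<longrightarrow> x j = 0" and i: "i < n"
  shows "(\<Sum>j<d. A i j * x j) = b i \<longleftrightarrow> (\<Sum>j\<in>B. M i j * (u j * x j)) = 1"
proof -
  have "(\<Sum>j<d. A i j * x j) = b i * (\<Sum>j\<in>B. M i j * (u j * x j))"
    using sum_supp[OF B xs, of A i] scale_sum[OF B i] by simp
  then show ?thesis using bpos[OF i] by simp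
qed

lemma good_det:
  assumes B: "B \<subseteq> {..<d}" and g: "bij_betw r B {..<n}"
  shows "det (submat_cols n A B) \<noteq> 0"
proof (rule det_kernel)
  show fin: "finite B" using B finite_subset by blast
  show "card B = n" using bij_betw_same_card[OF g] by simp
  fix z :: "nat \<Rightarrow> real"
  assume zs: "\<forall>j. j \<notin> B \<longrightarrow> z j = 0" and z: "\<forall>i<n. (\<Sum>j\<in>B. A i j * z j) = 0"
  have "\<forall>i<n. (\<Sum>j\<in>B. M i j * (u j * z j)) = 0"
  proof (intro allI impI)
    fix i assume i: "i < n"
    have "b i * (\<Sum>j\<in>B. M i j * (u j * z j)) = 0" using z i scale_sum[OF B i, of z] by simp
    then show "(\<Sum>j\<in>B. M i j * (u j * z j)) = 0" using bpos[OF i] by simp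
  qed
  then have uz: "\<forall>j\<in>B. u j * z j = 0" using ds.kernel[OF B g, of "\<lambda>j. u j * z j"] by simp
  show "\<forall>j\<in>B. z j = 0"
  proof
    fix j assume j: "j \<in> B"
    then have "0 < u j" using u_pos B by auto
    moreover have "u j * z j = 0" using uz j by blast
    ultimately show "z j = 0" by simp
  qed
qed

lemma basic_sol:
  assumes cb: "classical_basis n d A B"
  shows "(\<forall>j. j \<notin> B \<longrightarrow> basic_solution n d A b B j = 0) \<and>
         (\<forall>i<n. (\<Sum>j<d. A i j * basic_solution n d A b B j) = b i)"
proof -
  have B: "B \<subseteq> {..<d}" "card B = n" and dt: "det (submat_cols n A B) \<noteq> 0"
    using cb by (auto simp: classical_basis_def)
  have fin: "finite B" using B finite_subset by blast
  let ?P = "\<lambda>x. (\<forall>j. j \<notin> B \<longrightarrow> x j = 0) \<and> (\<forall>i<n. (\<Sum>j<d. A i j * x j) = b i)"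
  obtain x where x: "\<forall>j. j \<notin> B \<longrightarrow> x j = 0" "\<forall>i<n. (\<Sum>j\<in>B. A i j * x j) = b i"
    using det_solve[OF fin B(2) dt, of b] by blast
  have Px: "?P x" using x sum_supp[OF B(1) x(1), of A] by simp
  have un: "\<And>y. ?P y \<Longrightarrow> y = x"
  proof -
    fix y assume Py: "?P y"
    let ?z = "\<lambda>j. y j - x j"
    have zs: "\<forall>j. j \<notin> B \<longrightarrow> ?z j = 0" using Py x by simp
    have "\<forall>i<n. (\<Sum>j\<in>B. A i j * ?z j) = 0"
    proof (intro allI impI)
      fix i assume i: "i < n"
      have "(\<Sum>j\<in>B. A i j * ?z j) = (\<Sum>j\<in>B. A i j * y j) - (\<Sum>j\<in>B. A i j * x j)"
        by (simp add: algebra_simps sum_subtractf)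
      also have "\<dots> = 0" using Py i x sum_supp[OF B(1), of y A i] by simp
      finally show "(\<Sum>j\<in>B. A i j * ?z j) = 0" .
    qed
    from det_kernel_conv[OF fin B(2) dt zs this] have "\<forall>j. y j - x j = 0" .
    then show "y = x" by (intro ext) simp
  qed
  have "?P (THE x. ?P x)" using theI[of ?P x, OF Px un] .
  then show ?thesis unfolding basic_solution_def .
qed

lemma good_nondeg:
  assumes B: "B \<subseteq> {..<d}" and g: "bij_betw r B {..<n}"
  shows "nondegenerate_feasible_basis n d A b B"
proof -
  have cb: "classical_basis n d A B"
    unfolding classical_basis_def using B good_det[OF B g] bij_betw_same_card[OF g] by simp
  define x where "x = basic_solution n d A b B"
  have xs: "\<forall>j. j \<notin> B \<longrightarrow> x j = 0" and xe: "\<forall>i<n. (\<Sum>j<d. A i j * x j) = b i"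
    using basic_sol[OF cb] unfolding x_def by auto
  have "\<forall>i<n. (\<Sum>j\<in>B. M i j * (u j * x j)) = 1" using sol_iff[OF B xs] xe by simp
  then have "\<forall>j\<in>B. 0 < u j * x j" using ds.positive[OF B g, of "\<lambda>j. u j * x j"] by simp
  then have pos: "\<forall>j\<in>B. 0 < x j"
  proof (intro ballI)
    fix j assume "\<forall>j\<in>B. 0 < u j * x j" and j: "j \<in> B"
    then have "0 < u j * x j" "0 < u j" using u_pos B by auto
    then show "0 < x j" using zero_less_mult_pos by blast
  qed
  have "\<forall>j<d. 0 \<le> x j"
  proof (intro allI impI)
    fix j assume "j < d"
    show "0 \<le> x j"
    proof (cases "j \<in> B")
      case True then show ?thesis using pos by (simp add: order_less_imp_le)
    next
      case False then show ?thesis using xs by simp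
    qed
  qed
  moreover have "{j. x j \<noteq> 0} = B"
  proof -
    have "\<And>j. x j \<noteq> 0 \<longleftrightarrow> j \<in> B"
    proof -
      fix j show "x j \<noteq> 0 \<longleftrightarrow> j \<in> B"
      proof (cases "j \<in> B")
        case True then show ?thesis using pos by (metis less_irrefl)
      next
        case False then show ?thesis using xs by simp
      qed
    qed
    then show ?thesis by blast
  qed
  ultimately show ?thesis
    unfolding nondegenerate_feasible_basis_def feasible_basis_def x_def[symmetric] using cb by simp
qed

lemma feasible_is_good:
  assumes f: "feasible_basis n d A b B"
  shows "B \<subseteq> {..<d} \<and> bij_betw r B {..<n}"
proof -
  have cb: "classical_basis n d A B" and nn: "\<forall>j<d. 0 \<le> basic_solution n d A b B j"
    using f by (auto simp: feasible_basis_def)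
  have B: "B \<subseteq> {..<d}" "card B = n" using cb by (auto simp: classical_basis_def)
  define x where "x = basic_solution n d A b B"
  have xs: "\<forall>j. j \<notin> B \<longrightarrow> x j = 0" and xe: "\<forall>i<n. (\<Sum>j<d. A i j * x j) = b i"
    using basic_sol[OF cb] unfolding x_def by auto
  have y: "\<forall>i<n. (\<Sum>j\<in>B. M i j * (u j * x j)) = 1" using sol_iff[OF B(1) xs] xe by simp
  have "\<forall>j\<in>B. 0 \<le> u j * x j"
  proof
    fix j assume "j \<in> B"
    then have j: "j < d" using B by auto
    have "0 \<le> u j" using u_pos[OF j] by simp
    moreover have "0 \<le> x j" using nn j unfolding x_def by simp
    ultimately show "0 \<le> u j * x j" by simp
  qed
  from ds.feasible_good[OF B this y] B(1) show ?thesis by simp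
qed

lemma main_pos:
  "{B. feasible_basis n d A b B} = {B. tropical_basis n d At bt B}
         \<and> classical_nondegenerate n d A b
         \<and> tropical_nondegenerate n d At bt"
proof (intro conjI)
  show "{B. feasible_basis n d A b B} = {B. tropical_basis n d At bt B}"
  proof (rule Collect_cong)
    fix B show "feasible_basis n d A b B \<longleftrightarrow> tropical_basis n d At bt B"
    proof
      assume "feasible_basis n d A b B"
      then show "tropical_basis n d At bt B" using feasible_is_good trop_iff by simp
    next
      assume "tropical_basis n d At bt B"
      then have "B \<subseteq> {..<d}" "bij_betw r B {..<n}" using trop_iff by simp_all
      then show "feasible_basis n d A b B"
        using good_nondeg unfolding nondegenerate_feasible_basis_def by simp
    qed
  qed
  show "classical_nondegenerate n d A b"
    unfolding classical_nondegenerate_def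
  proof (intro allI impI)
    fix B assume "feasible_basis n d A b B"
    then have "B \<subseteq> {..<d}" "bij_betw r B {..<n}" using feasible_is_good by simp_all
    then show "nondegenerate_feasible_basis n d A b B" by (rule good_nondeg)
  qed
  show "tropical_nondegenerate n d At bt"
    unfolding tropical_nondegenerate_def using trop_nondeg by simp
qed

end

theorem proposition4p4:
  fixes n d :: nat
    and A :: "nat \<Rightarrow> nat \<Rightarrow> real" and b :: "nat \<Rightarrow> real"
    and At :: "nat \<Rightarrow> nat \<Rightarrow> ereal" and bt :: "nat \<Rightarrow> ereal"
  assumes A_nonneg: "\<forall>i<n. \<forall>j<d. A i j \<ge> 0"
    and b_nonneg: "\<forall>i<n. b i \<ge> 0"
    and A_col_nonzero: "\<forall>j<d. \<exists>i<n. A i j \<noteq> 0"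
    and b_nonzero: "\<forall>i<n. b i \<noteq> 0"
    and dom: "dominance_condition n d A b"
    and At_trop: "\<forall>i<n. \<forall>j<d. At i j \<noteq> \<infinity>"
    and bt_trop: "\<forall>i<n. bt i \<noteq> \<infinity>"
    and At_col: "\<forall>j<d. \<exists>i<n. At i j \<noteq> -\<infinity>"
    and bt_fin: "\<forall>i<n. bt i \<noteq> -\<infinity>"
    and same_argmin: "\<forall>j<d. argmin_rows n (\<lambda>i. classical_ratio A b i j)
                            = argmin_rows n (\<lambda>i. tdiff (bt i) (At i j))"
  shows "{B. feasible_basis n d A b B} = {B. tropical_basis n d At bt B}
         \<and> classical_nondegenerate n d A b
         \<and> tropical_nondegenerate n d At bt"
proof (cases "n = 0")
  case False
  interpret ctx n d A b At bt
    using assms False by unfold_locales auto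
  show ?thesis by (rule main_pos)
next
  case True
  then have d0: "d = 0" using A_col_nonzero by auto
  have bs: "basic_solution n d A b {} = (\<lambda>j. 0)"
    unfolding basic_solution_def by (rule the_equality) (use True in auto)
  have "submat_cols 0 A {} = 1\<^sub>m 0" by (rule eq_matI) (auto simp: submat_cols_def)
  then have dt: "det (submat_cols n A {}) = 1" using True by simp
  have fe: "feasible_basis n d A b B \<longleftrightarrow> B = {}" for B
  proof
    assume "feasible_basis n d A b B" then show "B = {}"
      using d0 by (simp add: feasible_basis_def classical_basis_def)
  next
    assume B: "B = {}" show "feasible_basis n d A b B"
      unfolding feasible_basis_def classical_basis_def B using d0 dt True by simp
  qed
  have tr: "tropical_basis n d At bt B \<longleftrightarrow> B = {}" for B
  proof
    assume "tropical_basis n d At bt B" then show "B = {}"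
      using d0 by (simp add: tropical_basis_def)
  next
    assume B: "B = {}" show "tropical_basis n d At bt B"
      unfolding tropical_basis_def B using d0 True by (intro conjI exI[of _ id]) simp_all
  qed
  show ?thesis
  proof (intro conjI)
    show "{B. feasible_basis n d A b B} = {B. tropical_basis n d At bt B}" by (simp add: fe tr)
    show "classical_nondegenerate n d A b"
      unfolding classical_nondegenerate_def nondegenerate_feasible_basis_def by (simp add: fe bs)
    show "tropical_nondegenerate n d At bt"
      unfolding tropical_nondegenerate_def nondegenerate_tropical_basis_def by (simp add: tr)
  qed
qed

end
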